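(* Let $X$ be a compact metric space and $T:X\to X$ a local homeomorphism. Then \[{\rm dim}_{\rm tow}(X,T)\le 2\,{\rm dim}_{\rm Rok}(X,T)+1.\]
   Context: For $j\ge0$, $T^{-j}(A)$ is the preimage under $T^j$. Rokhlin dimension: an open $N$-Rokhlin tower is a collection $\{U_0,\dots,U_{N-1}\}$ of nonempty open sets with $U_k=T^{-1}(U_{k-1})$ for $k\ge1$ and pairwise disjoint closures; ${\rm dim}_{\rm Rok}(X,T)$ is the least $d$ such that for every $N\ge1$, $X$ is covered by the members of at most $d+1$ open $N$-Rokhlin towers. Tower dimension: ${\rm dim}_{\rm tow}(X,T)$ is the least $d\in\mathbb{N}$ such that for every finite $E\subseteq\mathbb{Z}$ there are finitely many pairs $(V_1,S_1),\dots,(V_s,S_s)$ with $V_i\subseteq X$ open and $S_i\subseteq\mathbb{N}$ finite such that: (a) $T^{-m}(\overline{V_i})\cap T^{-n}(\overline{V_i})=\varnothing$ for distinct $m,n\in S_i$; (b) the family $\{T^{-n}(V_i):n\in S_i,1\le i\le s\}$ has chromatic number at most $d+1$, i.e. can be partitioned into at most $d+1$ subfamilies each consisting of pairwise disjoint sets; (c) this family covers $X$; (d) for every $x\in X$ there are $i$ and $n\in S_i$ with $x\in T^{-n}(V_i)$ and $E+n\subseteq S_i$. (Value $\infty$ if no such $d$.) *)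

theory Defs
  imports "HOL-Analysis.Analysis"
begin

definition preim :: "'a set \<Rightarrow> ('a \<Rightarrow> 'a) \<Rightarrow> nat \<Rightarrow> 'a set \<Rightarrow> 'a set" where
  "preim X T j A = {x \<in> X. (T ^^ j) x \<in> A}"

definition local_homeo :: "'a::topological_space set \<Rightarrow> ('a \<Rightarrow> 'a) \<Rightarrow> bool" where
  "local_homeo X T \<longleftrightarrow> T ` X \<subseteq> X \<and>
     (\<forall>x\<in>X. \<exists>U g. openin (top_of_set X) U \<and> x \<in> U \<and>
        openin (top_of_set X) (T ` U) \<and> homeomorphism U (T ` U) T g)"

definition rok_tower :: "'a::topological_space set \<Rightarrow> ('a \<Rightarrow> 'a) \<Rightarrow> nat \<Rightarrow> (nat \<Rightarrow> 'a set) \<Rightarrow> bool" where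
  "rok_tower X T N U \<longleftrightarrow>
     (\<forall>k<N. U k \<noteq> {} \<and> openin (top_of_set X) (U k)) \<and>
     (\<forall>k. 1 \<le> k \<and> k < N \<longrightarrow> U k = preim X T 1 (U (k - 1))) \<and>
     (\<forall>j<N. \<forall>k<N. j \<noteq> k \<longrightarrow> closure (U j) \<inter> closure (U k) = {})"

definition rok_cond :: "'a::topological_space set \<Rightarrow> ('a \<Rightarrow> 'a) \<Rightarrow> nat \<Rightarrow> bool" where
  "rok_cond X T d \<longleftrightarrow> (\<forall>N\<ge>1. \<exists>m Us. m \<le> d + 1 \<and>
      (\<forall>i<m. rok_tower X T N (Us i)) \<and> X \<subseteq> (\<Union>i<m. \<Union>k<N. Us i k))"

definition dim_Rok :: "'a::topological_space set \<Rightarrow> ('a \<Rightarrow> 'a) \<Rightarrow> enat" where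
  "dim_Rok X T = (INF d \<in> {d. rok_cond X T d}. enat d)"

text \<open>Tower-dimension condition for d: pairs (V i, S i), i < s; the family
  {T^{-n}(V i)} is indexed by the pairs (i,n) and coloured by c with values \<le> d.\<close>
definition tow_cond :: "'a::topological_space set \<Rightarrow> ('a \<Rightarrow> 'a) \<Rightarrow> nat \<Rightarrow> bool" where
  "tow_cond X T d \<longleftrightarrow> (\<forall>E :: int set. finite E \<longrightarrow>
     (\<exists>(s::nat) (V :: nat \<Rightarrow> 'a set) (S :: nat \<Rightarrow> nat set) (c :: nat \<Rightarrow> nat \<Rightarrow> nat).
        (\<forall>i<s. openin (top_of_set X) (V i) \<and> finite (S i)) \<and>
        (\<forall>i<s. \<forall>m\<in>S i. \<forall>n\<in>S i. m \<noteq> n \<longrightarrow>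
            preim X T m (closure (V i)) \<inter> preim X T n (closure (V i)) = {}) \<and>
        (\<forall>i<s. \<forall>n\<in>S i. c i n \<le> d) \<and>
        (\<forall>i<s. \<forall>n\<in>S i. \<forall>j<s. \<forall>m\<in>S j. (i, n) \<noteq> (j, m) \<and> c i n = c j m \<longrightarrow>
            preim X T n (V i) \<inter> preim X T m (V j) = {}) \<and>
        X \<subseteq> (\<Union>i<s. \<Union>n\<in>S i. preim X T n (V i)) \<and>
        (\<forall>x\<in>X. \<exists>i<s. \<exists>n\<in>S i. x \<in> preim X T n (V i) \<and>
            (\<forall>e\<in>E. \<exists>k\<in>S i. int k = e + int n))))"

definition dim_tow :: "'a::topological_space set \<Rightarrow> ('a \<Rightarrow> 'a) \<Rightarrow> enat" where
  "dim_tow X T = (INF d \<in> {d. tow_cond X T d}. enat d)"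

end

theory Submission
  imports Defs
begin

lemma lh_maps: "local_homeo X T \<Longrightarrow> x \<in> X \<Longrightarrow> (T ^^ c) x \<in> X"
  by (induction c) (auto simp: local_homeo_def)

lemma lh_open_map:
  assumes lh: "local_homeo X T" and W: "openin (top_of_set X) W"
  shows "openin (top_of_set X) (T ` W)"
proof (subst openin_subopen, intro ballI)
  fix y assume "y \<in> T ` W"
  then obtain w where w: "w \<in> W" "y = T w" by auto
  have "w \<in> X" using openin_imp_subset[OF W] w(1) by blast
  then obtain U g where U: "openin (top_of_set X) U" "w \<in> U"
    "openin (top_of_set X) (T ` U)" "homeomorphism U (T ` U) T g"
    using lh unfolding local_homeo_def by blast
  have UX: "U \<subseteq> X" using openin_imp_subset[OF U(1)] .
  have "openin (top_of_set X) (U \<inter> W)" using W U(1) by (rule openin_Int[rotated])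
  then have "openin (top_of_set U) (U \<inter> W)"
    using UX by (meson inf_le1 openin_subset_trans)
  then have "openin (top_of_set (T ` U)) (T ` (U \<inter> W))"
    using homeomorphism_imp_open_map[OF U(4)] by blast
  then have "openin (top_of_set X) (T ` (U \<inter> W))"
    using U(3) openin_trans by blast
  then show "\<exists>T'. openin (top_of_set X) T' \<and> y \<in> T' \<and> T' \<subseteq> T ` W"
    using w U(2) by blast
qed

lemma lh_open_map_pow:
  assumes lh: "local_homeo X T" and W: "openin (top_of_set X) W"
  shows "openin (top_of_set X) ((T ^^ c) ` W)"
  using W
proof (induction c arbitrary: W)
  case 0
  then show ?case by simp
next
  case (Suc c)
  have "(T ^^ Suc c) ` W = (T ^^ c) ` (T ` W)"
    by (metis funpow_Suc_right image_comp)
  then show ?case using Suc lh_open_map[OF lh Suc.prems] by simp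
qed

lemma preim_Suc:
  assumes lh: "local_homeo X T"
  shows "preim X T 1 (preim X T l A) = preim X T (Suc l) A"
proof -
  have TX: "\<And>x. x \<in> X \<Longrightarrow> T x \<in> X" using lh unfolding local_homeo_def by blast
  have e: "\<And>x. (T ^^ Suc l) x = (T ^^ l) (T x)" by (simp only: funpow_Suc_right o_apply)
  show ?thesis unfolding preim_def using TX e by auto
qed

lemma tower_levels:
  assumes lh: "local_homeo X T" and tw: "rok_tower X T N U" and l: "l < N"
  shows "U l = preim X T l (U 0)"
  using l
proof (induction l)
  case 0
  then have "openin (top_of_set X) (U 0)" using tw unfolding rok_tower_def by blast
  then have "U 0 \<subseteq> X" by (rule openin_imp_subset)
  then show ?case unfolding preim_def by auto
next
  case (Suc l)
  then have "U (Suc l) = preim X T 1 (U l)" using tw unfolding rok_tower_def by auto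
  then show ?case using Suc preim_Suc[OF lh] by simp
qed

lemma tower_closure_disj:
  assumes lh: "local_homeo X T" and tw: "rok_tower X T N U" and cX: "closed X"
    and ab: "a < b" "b - a < N"
  shows "preim X T a (closure (U 0)) \<inter> preim X T b (closure (U 0)) = {}"
proof (rule ccontr)
  assume "\<not> ?thesis"
  then obtain y where y: "y \<in> X" "(T ^^ a) y \<in> closure (U 0)" "(T ^^ b) y \<in> closure (U 0)"
    unfolding preim_def by auto
  define c where "c = b - a"
  define z where "z = (T ^^ a) y"
  have zX: "z \<in> X" using lh_maps[OF lh y(1)] z_def by simp
  have Tcz: "(T ^^ c) z \<in> closure (U 0)"
    using y(3) ab unfolding z_def c_def
    by (metis funpow_add le_add_diff_inverse2 less_imp_le o_apply)
  have c: "c < N" "c \<noteq> 0" using ab c_def by auto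
  have "openin (top_of_set X) (U 0)" using tw c unfolding rok_tower_def by auto
  then have U0X: "U 0 \<subseteq> X" by (rule openin_imp_subset)
  have Uc: "U c = preim X T c (U 0)" using tower_levels[OF lh tw c(1)] .
  have "z \<in> closure (U c)"
    unfolding closure_iff_nhds_not_empty
  proof (intro allI impI)
    fix A S assume SA: "S \<subseteq> A" "open S" "z \<in> S"
    have "openin (top_of_set X) (X \<inter> S)" using SA(2) by (simp add: openin_open_Int)
    then have "openin (top_of_set X) ((T ^^ c) ` (X \<inter> S))"
      using lh_open_map_pow[OF lh] by blast
    then obtain Op where O: "open Op" "(T ^^ c) ` (X \<inter> S) = X \<inter> Op"
      unfolding openin_open by blast
    have "(T ^^ c) z \<in> (T ^^ c) ` (X \<inter> S)" using zX SA(3) by (intro imageI IntI)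
    then have "(T ^^ c) z \<in> Op" using O(2) by simp
    then have "U 0 \<inter> Op \<noteq> {}"
      using Tcz[unfolded closure_iff_nhds_not_empty, rule_format, of Op Op] O(1) by simp
    then obtain u where u: "u \<in> U 0" "u \<in> Op" by blast
    then have "u \<in> (T ^^ c) ` (X \<inter> S)" using O U0X by blast
    then obtain w where w: "w \<in> X" "w \<in> S" "(T ^^ c) w = u" by blast
    then have "w \<in> U c" using u(1) by (simp add: Uc preim_def)
    then show "U c \<inter> A \<noteq> {}" using w SA by blast
  qed
  moreover have "z \<in> closure (U 0)" using y z_def by simp
  moreover have "closure (U 0) \<inter> closure (U c) = {}"
  proof -
    have "\<forall>j<N. \<forall>k<N. j \<noteq> k \<longrightarrow> closure (U j) \<inter> closure (U k) = {}"
      using tw unfolding rok_tower_def by blast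
    moreover have "0 < N" "(0::nat) \<noteq> c" using c by auto
    ultimately show ?thesis using c(1) by blast
  qed
  ultimately show False by (metis IntI empty_iff)
qed

lemma tower_closure_disj2:
  assumes lh: "local_homeo X T" and tw: "rok_tower X T N U" and cX: "closed X"
    and mn: "m \<in> {a..<a+N}" "n \<in> {a..<a+N}" "m \<noteq> n"
  shows "preim X T m (closure (U 0)) \<inter> preim X T n (closure (U 0)) = {}"
proof (cases "m < n")
  case True
  have "n - m < N" using mn by auto
  then show ?thesis by (rule tower_closure_disj[OF lh tw cX True])
next
  case False
  then have nm: "n < m" using mn by auto
  have "m - n < N" using mn by auto
  then have "preim X T n (closure (U 0)) \<inter> preim X T m (closure (U 0)) = {}"
    by (rule tower_closure_disj[OF lh tw cX nm])
  then show ?thesis by (simp add: Int_commute)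
qed

lemma preim_mono: "A \<subseteq> B \<Longrightarrow> preim X T n A \<subseteq> preim X T n B"
  unfolding preim_def by auto

lemma tow_from_rok:
  fixes X :: "'a::metric_space set"
  assumes cX: "compact X" and lh: "local_homeo X T" and rc: "rok_cond X T d"
  shows "tow_cond X T (2 * d + 1)"
  unfolding tow_cond_def
proof (intro allI impI)
  fix E :: "int set" assume fE: "finite E"
  define M where "M = nat (Max (insert 0 (abs ` E)))"
  have Me: "\<And>e. e \<in> E \<Longrightarrow> - int M \<le> e \<and> e \<le> int M"
  proof -
    fix e assume "e \<in> E"
    then have "\<bar>e\<bar> \<le> Max (insert 0 (abs ` E))" using fE by (intro Max_ge) auto
    moreover have "0 \<le> Max (insert 0 (abs ` E))" using fE by (intro Max_ge) auto
    ultimately show "- int M \<le> e \<and> e \<le> int M" unfolding M_def by linarith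
  qed
  define N where "N = 4 * M + 4"
  define h where "h = 2 * M + 2"
  have "N \<ge> 1" unfolding N_def by simp
  then have "\<exists>m Us. m \<le> d + 1 \<and> (\<forall>i<m. rok_tower X T N (Us i)) \<and> X \<subseteq> (\<Union>i<m. \<Union>k<N. Us i k)"
    using rc unfolding rok_cond_def by simp
  then obtain m Us where m: "m \<le> d + 1" and tw0: "\<forall>i<m. rok_tower X T N (Us i)"
    and cov: "X \<subseteq> (\<Union>i<m. \<Union>k<N. Us i k)"
    by (elim exE conjE)
  have tw: "\<And>i. i < m \<Longrightarrow> rok_tower X T N (Us i)" using tw0 by simp
  have clX: "closed X" using cX by (rule compact_imp_closed)
  define s where "s = 2 * m"
  define V where "V = (\<lambda>i. Us (i div 2) 0)"
  define S where "S = (\<lambda>i::nat. {(i mod 2) * h ..< (i mod 2) * h + N})"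
  define col where "col = (\<lambda>(i::nat) (n::nat). i)"
  have twi: "\<And>i. i < s \<Longrightarrow> rok_tower X T N (Us (i div 2))"
    using tw unfolding s_def by auto
  have c1: "\<forall>i<s. openin (top_of_set X) (V i) \<and> finite (S i)"
  proof (intro allI impI conjI)
    fix i assume "i < s"
    then have "rok_tower X T N (Us (i div 2))" by (rule twi)
    moreover have "0 < N" unfolding N_def by simp
    ultimately show "openin (top_of_set X) (V i)" unfolding V_def rok_tower_def by auto
    show "finite (S i)" unfolding S_def by simp
  qed
  have disj: "\<And>i m' n. i < s \<Longrightarrow> m' \<in> S i \<Longrightarrow> n \<in> S i \<Longrightarrow> m' \<noteq> n \<Longrightarrow>
      preim X T m' (closure (V i)) \<inter> preim X T n (closure (V i)) = {}"
  proof -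
    fix i m' n assume a: "i < s" "m' \<in> S i" "n \<in> S i" "m' \<noteq> n"
    have t: "rok_tower X T N (Us (i div 2))" by (rule twi[OF a(1)])
    show "preim X T m' (closure (V i)) \<inter> preim X T n (closure (V i)) = {}"
      unfolding V_def by (rule tower_closure_disj2[OF lh t clX a(2)[unfolded S_def] a(3)[unfolded S_def] a(4)])
  qed
  have c2: "\<forall>i<s. \<forall>m'\<in>S i. \<forall>n\<in>S i. m' \<noteq> n \<longrightarrow>
            preim X T m' (closure (V i)) \<inter> preim X T n (closure (V i)) = {}"
    using disj by blast
  have c3: "\<forall>i<s. \<forall>n\<in>S i. col i n \<le> 2 * d + 1"
    unfolding col_def s_def using m by auto
  have c4: "\<forall>i<s. \<forall>n\<in>S i. \<forall>j<s. \<forall>m'\<in>S j. (i, n) \<noteq> (j, m') \<and> col i n = col j m' \<longrightarrow>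
            preim X T n (V i) \<inter> preim X T m' (V j) = {}"
  proof (intro allI impI ballI)
    fix i n j m' assume a: "i < s" "n \<in> S i" "j < s" "m' \<in> S j"
      "(i, n) \<noteq> (j, m') \<and> col i n = col j m'"
    then have ij: "i = j" "n \<noteq> m'" unfolding col_def by auto
    have "preim X T n (V i) \<subseteq> preim X T n (closure (V i))"
      by (rule preim_mono[OF closure_subset])
    moreover have "preim X T m' (V i) \<subseteq> preim X T m' (closure (V i))"
      by (rule preim_mono[OF closure_subset])
    moreover have "preim X T n (closure (V i)) \<inter> preim X T m' (closure (V i)) = {}"
      using disj[OF a(1) a(2)] a(4) ij by simp
    ultimately show "preim X T n (V i) \<inter> preim X T m' (V j) = {}" using ij by blast
  qed
  have c6: "\<forall>x\<in>X. \<exists>i<s. \<exists>n\<in>S i. x \<in> preim X T n (V i) \<and>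
            (\<forall>e\<in>E. \<exists>k\<in>S i. int k = e + int n)"
  proof
    fix x assume xX: "x \<in> X"
    have vX: "(T ^^ M) x \<in> X" by (rule lh_maps[OF lh xX])
    then have "(T ^^ M) x \<in> (\<Union>i<m. \<Union>k<N. Us i k)" using cov by (rule subsetD[rotated])
    then obtain j l where jl: "j < m" "l < N" "(T ^^ M) x \<in> Us j l" by auto
    have "Us j l = preim X T l (Us j 0)" by (rule tower_levels[OF lh tw[OF jl(1)] jl(2)])
    then have "(T ^^ l) ((T ^^ M) x) \<in> Us j 0" using jl(3) unfolding preim_def by blast
    then have "(T ^^ (l + M)) x \<in> Us j 0" by (simp add: funpow_add)
    then have xin: "x \<in> preim X T (l + M) (Us j 0)" using xX unfolding preim_def by blast
    show "\<exists>i<s. \<exists>n\<in>S i. x \<in> preim X T n (V i) \<and> (\<forall>e\<in>E. \<exists>k\<in>S i. int k = e + int n)"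
    proof (cases "l + 2 * M < N")
      case True
      have i: "2 * j < s" "(2 * j) div 2 = j" "(2 * j) mod 2 = 0" using jl(1) unfolding s_def by auto
      have Si: "S (2 * j) = {0..<N}" unfolding S_def using i by simp
      have "\<forall>e\<in>E. \<exists>k\<in>S (2 * j). int k = e + int (l + M)"
      proof
        fix e assume "e \<in> E"
        then have b: "- int M \<le> e" "e \<le> int M" using Me by auto
        show "\<exists>k\<in>S (2 * j). int k = e + int (l + M)"
          by (rule bexI[of _ "nat (e + int (l + M))"]) (use b True Si in auto)
      qed
      moreover have "l + M \<in> S (2 * j)" using Si True by simp
      moreover have "x \<in> preim X T (l + M) (V (2 * j))" using xin i unfolding V_def by simp
      ultimately show ?thesis using i(1) by blast
    next
      case False
      have i: "2 * j + 1 < s" "(2 * j + 1) div 2 = j" "(2 * j + 1) mod 2 = 1"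
        using jl(1) unfolding s_def by auto
      have Si: "S (2 * j + 1) = {h..<h + N}" unfolding S_def using i by simp
      have "\<forall>e\<in>E. \<exists>k\<in>S (2 * j + 1). int k = e + int (l + M)"
      proof
        fix e assume "e \<in> E"
        then have b: "- int M \<le> e" "e \<le> int M" using Me by auto
        show "\<exists>k\<in>S (2 * j + 1). int k = e + int (l + M)"
          by (rule bexI[of _ "nat (e + int (l + M))"])
             (use b False Si jl(2) in \<open>auto simp: h_def N_def\<close>)
      qed
      moreover have "l + M \<in> S (2 * j + 1)" using Si False jl(2) by (simp add: h_def N_def)
      moreover have "x \<in> preim X T (l + M) (V (2 * j + 1))" using xin i unfolding V_def by simp
      ultimately show ?thesis using i(1) by blast
    qed
  qed
  have c5: "X \<subseteq> (\<Union>i<s. \<Union>n\<in>S i. preim X T n (V i))"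
  proof
    fix x assume "x \<in> X"
    then obtain i n where "i < s" "n \<in> S i" "x \<in> preim X T n (V i)" using c6 by meson
    then show "x \<in> (\<Union>i<s. \<Union>n\<in>S i. preim X T n (V i))" by auto
  qed
  show "\<exists>(s::nat) (V :: nat \<Rightarrow> 'a set) (S :: nat \<Rightarrow> nat set) (c :: nat \<Rightarrow> nat \<Rightarrow> nat).
        (\<forall>i<s. openin (top_of_set X) (V i) \<and> finite (S i)) \<and>
        (\<forall>i<s. \<forall>m\<in>S i. \<forall>n\<in>S i. m \<noteq> n \<longrightarrow>
            preim X T m (closure (V i)) \<inter> preim X T n (closure (V i)) = {}) \<and>
        (\<forall>i<s. \<forall>n\<in>S i. c i n \<le> 2 * d + 1) \<and>
        (\<forall>i<s. \<forall>n\<in>S i. \<forall>j<s. \<forall>m\<in>S j. (i, n) \<noteq> (j, m) \<and> c i n = c j m \<longrightarrow>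
            preim X T n (V i) \<inter> preim X T m (V j) = {}) \<and>
        X \<subseteq> (\<Union>i<s. \<Union>n\<in>S i. preim X T n (V i)) \<and>
        (\<forall>x\<in>X. \<exists>i<s. \<exists>n\<in>S i. x \<in> preim X T n (V i) \<and>
            (\<forall>e\<in>E. \<exists>k\<in>S i. int k = e + int n))"
    apply (rule exI[of _ s], rule exI[of _ V], rule exI[of _ S], rule exI[of _ col])
    by (rule conjI[OF c1 conjI[OF c2 conjI[OF c3 conjI[OF c4 conjI[OF c5 c6]]]]])
qed

theorem lemma5p2:
  fixes X :: "'a::metric_space set" and T :: "'a \<Rightarrow> 'a"
  assumes "compact X"
    and "local_homeo X T"
  shows "dim_tow X T \<le> 2 * dim_Rok X T + 1"
proof (cases "{d. rok_cond X T d} = {}")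
  case True
  then have "dim_Rok X T = \<infinity>" unfolding dim_Rok_def True by (simp add: top_enat_def)
  then show ?thesis by (simp add: enat_0_iff numeral_eq_enat times_enat_def plus_enat_def)
next
  case False
  define d0 where "d0 = Inf {d. rok_cond X T d}"
  have d0: "rok_cond X T d0" using Inf_nat_def1[OF False] unfolding d0_def by simp
  have "dim_Rok X T = enat d0"
  proof (rule antisym)
    show "dim_Rok X T \<le> enat d0" unfolding dim_Rok_def using d0 by (intro Inf_lower) auto
    show "enat d0 \<le> dim_Rok X T" unfolding dim_Rok_def
    proof (rule Inf_greatest)
      fix x assume "x \<in> enat ` {d. rok_cond X T d}"
      then obtain d where "rok_cond X T d" "x = enat d" by blast
      then show "enat d0 \<le> x" unfolding d0_def by (simp add: cInf_lower)
    qed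
  qed
  moreover have "dim_tow X T \<le> enat (2 * d0 + 1)"
    unfolding dim_tow_def using tow_from_rok[OF assms d0] by (intro Inf_lower) auto
  ultimately show ?thesis by (simp add: one_enat_def numeral_eq_enat)
qed

end
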